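(* Let $(X,X^+)$ be an ordered Banach space whose positive cone $X^+$ is generating and normal, and let $T \in \mathcal{L}(X)$ be positive. Then the following assertions are equivalent: (i) $\operatorname{r}(T) < 1$, where $\operatorname{r}(T)$ denotes the spectral radius of $T$. (ii) The operator $\mathrm{id} - T : X \to X$ is bijective and its inverse $(\mathrm{id}-T)^{-1}$ is positive. (iii) (Monotone bounded invertibility property) There exists a number $c \ge 0$ such that for all $x,y \in X^+$, $(\mathrm{id}-T)x \le y$ implies $\|x\| \le c\|y\|$. (iv) (Uniform small-gain condition) There is a number $\eta > 0$ such that $\operatorname{dist}\big((T-\mathrm{id})x, X^+\big) \ge \eta \|x\|$ for each $x \in X^+$. (v) (Robust small-gain condition) There exists $\varepsilon > 0$ such that $(T+P)x \not\ge x$ for every $0 \neq x \in X^+$ and every positive operator $P \in \mathcal{L}(X)$ with $\|P\| \le \varepsilon$. (vi) (Rank-1 robust small-gain condition) There exists $\varepsilon > 0$ such that $(T+P)x \not\ge x$ for every $0 \neq x \in X^+$ and every positive operator $P \in \mathcal{L}(X)$ of rank $1$ with $\|P\| \le \varepsilon$.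
   Context: An ordered Banach space $(X,X^+)$ is a real Banach space $X$ together with a non-empty closed set $X^+\subseteq X$ such that $\alpha X^+ + \beta X^+ \subseteq X^+$ for all $\alpha,\beta\ge 0$ and $X^+\cap(-X^+)=\{0\}$; it induces the partial order $x\le y \iff y-x\in X^+$, and $x\not\ge y$ means $x-y\notin X^+$. The cone is generating if $X^+ - X^+ = X$, and normal if there is $C>0$ with $\|x\|\le C\|y\|$ whenever $0\le x\le y$. A linear operator $A$ is positive if $AX^+\subseteq X^+$. $\operatorname{dist}(x,S)=\inf\{\|x-y\|: y\in S\}$. Spectral notions (spectrum, spectral radius) of an operator on a real Banach space are those of its unique bounded extension to a complexification of $X$. $\mathcal{L}(X)$ is the space of bounded linear operators on $X$ and $\mathrm{id}$ the identity. *)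

theory Defs
  imports "HOL-Analysis.Analysis"
begin

definition ordered_cone :: "'a::banach set \<Rightarrow> bool" where
  "ordered_cone K \<longleftrightarrow> K \<noteq> {} \<and> closed K \<and>
     (\<forall>\<alpha> \<beta> x y. \<alpha> \<ge> 0 \<longrightarrow> \<beta> \<ge> 0 \<longrightarrow> x \<in> K \<longrightarrow> y \<in> K \<longrightarrow> \<alpha> *\<^sub>R x + \<beta> *\<^sub>R y \<in> K) \<and>
     K \<inter> uminus ` K = {0}"

definition generating_cone :: "'a::banach set \<Rightarrow> bool" where
  "generating_cone K \<longleftrightarrow> {x - y | x y. x \<in> K \<and> y \<in> K} = UNIV"

definition normal_cone :: "'a::banach set \<Rightarrow> bool" where
  "normal_cone K \<longleftrightarrow> (\<exists>C>0. \<forall>x y. x \<in> K \<longrightarrow> y - x \<in> K \<longrightarrow> norm x \<le> C * norm y)"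

definition positive_op :: "'a::banach set \<Rightarrow> ('a \<Rightarrow>\<^sub>L 'a) \<Rightarrow> bool" where
  "positive_op K T \<longleftrightarrow> blinfun_apply T ` K \<subseteq> K"

text \<open>Complexification X_C = X \<times> X, with (a + i b)(x,y) = (a x - b y, b x + a y) and
  T_C (x,y) = (T x, T y).  The operator T_C - \<lambda> id acting on X \<times> X (as a bounded real-linear map).\<close>
definition complexified_shift :: "('a::banach \<Rightarrow>\<^sub>L 'a) \<Rightarrow> complex \<Rightarrow> (('a \<times> 'a) \<Rightarrow>\<^sub>L ('a \<times> 'a))" where
  "complexified_shift T z = Blinfun (\<lambda>(x, y).
      (T x - (Re z *\<^sub>R x - Im z *\<^sub>R y), T y - (Im z *\<^sub>R x + Re z *\<^sub>R y)))"

text \<open>Spectrum of (the complexification of) T: those \<lambda> for which T_C - \<lambda> id has no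
  bounded inverse. (Any bounded real-linear inverse of a complex-linear map is complex-linear.)\<close>
definition op_spectrum :: "('a::banach \<Rightarrow>\<^sub>L 'a) \<Rightarrow> complex set" where
  "op_spectrum T = {z. \<not> (\<exists>S. S o\<^sub>L complexified_shift T z = id_blinfun \<and>
                                 complexified_shift T z o\<^sub>L S = id_blinfun)}"

definition spectral_radius :: "('a::banach \<Rightarrow>\<^sub>L 'a) \<Rightarrow> real" where
  "spectral_radius T = (if op_spectrum T = {} then 0 else Sup (cmod ` op_spectrum T))"

end

theory Submission
  imports Defs
begin

lemma cone_comb: "ordered_cone K \<Longrightarrow> 0 \<le> a \<Longrightarrow> 0 \<le> b \<Longrightarrow> x \<in> K \<Longrightarrow> y \<in> K \<Longrightarrow> a *\<^sub>R x + b *\<^sub>R y \<in> K"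
  unfolding ordered_cone_def by blast

lemma cone_0: "ordered_cone K \<Longrightarrow> 0 \<in> K"
proof -
  assume a: "ordered_cone K"
  then obtain x where "x \<in> K" unfolding ordered_cone_def by blast
  from cone_comb[OF a _ _ this this, of 0 0] show ?thesis by simp
qed

lemma cone_add: "ordered_cone K \<Longrightarrow> x \<in> K \<Longrightarrow> y \<in> K \<Longrightarrow> x + y \<in> K"
  using cone_comb[of K 1 1 x y] by simp

lemma cone_scale: "ordered_cone K \<Longrightarrow> 0 \<le> t \<Longrightarrow> x \<in> K \<Longrightarrow> t *\<^sub>R x \<in> K"
  using cone_comb[of K t 0 x x] by simp

lemma cone_closed: "ordered_cone K \<Longrightarrow> closed K"
  unfolding ordered_cone_def by blast

lemma cone_antisym: "ordered_cone K \<Longrightarrow> x \<in> K \<Longrightarrow> - x \<in> K \<Longrightarrow> x = 0"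
proof -
  assume a: "ordered_cone K" "x \<in> K" "- x \<in> K"
  have "x = - (- x)" by simp
  with a(3) have "x \<in> uminus ` K" by blast
  with a(1,2) show ?thesis unfolding ordered_cone_def by blast
qed

lemma cone_sum: "ordered_cone K \<Longrightarrow> (\<And>i. i \<in> I \<Longrightarrow> f i \<in> K) \<Longrightarrow> sum f I \<in> K"
proof (induction I rule: infinite_finite_induct)
  case (infinite A) then show ?case by (simp add: cone_0)
next
  case empty then show ?case by (simp add: cone_0)
next
  case (insert x F) then show ?case by (simp add: cone_add)
qed

lemma cone_suminf:
  assumes "ordered_cone K" "summable f" "\<And>n. f n \<in> K"
  shows "suminf f \<in> K"
proof (rule Lim_in_closed_set[OF cone_closed[OF assms(1)]])
  show "\<forall>\<^sub>F n in sequentially. (\<Sum>i<n. f i) \<in> K"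
    using assms by (auto intro!: always_eventually cone_sum)
  show "(\<lambda>n. \<Sum>i<n. f i) \<longlonglongrightarrow> suminf f"
    using assms(2) summable_LIMSEQ by blast
qed simp

primrec bpow :: "('a::real_normed_vector \<Rightarrow>\<^sub>L 'a) \<Rightarrow> nat \<Rightarrow> ('a \<Rightarrow>\<^sub>L 'a)" where
  "bpow A 0 = id_blinfun"
| "bpow A (Suc n) = A o\<^sub>L bpow A n"

lemma bpow_Suc': "blinfun_apply (bpow A (Suc n)) x = bpow A n (A x)"
proof (induction n arbitrary: x)
  case 0 then show ?case by simp
next
  case (Suc n) then show ?case by simp
qed

lemma norm_bpow: "norm (bpow A n) \<le> norm A ^ n"
proof (induction n)
  case 0 then show ?case by (simp add: norm_blinfun_id_le)
next
  case (Suc n)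
  have "norm (bpow A (Suc n)) \<le> norm A * norm (bpow A n)"
    by (simp add: norm_blinfun_compose)
  also have "\<dots> \<le> norm A * norm A ^ n"
    using Suc by (simp add: mult_left_mono)
  finally show ?case by simp
qed

lemma pos_bpow: "positive_op K A \<Longrightarrow> x \<in> K \<Longrightarrow> bpow A n x \<in> K"
  by (induction n) (auto simp: positive_op_def)

lemma summable_apply:
  assumes "summable (\<lambda>n. norm (F n :: 'a::real_normed_vector \<Rightarrow>\<^sub>L 'b::banach))"
  shows "summable (\<lambda>n. F n x)" "(\<Sum>n. F n) x = (\<Sum>n. F n x)"
proof -
  show s: "summable (\<lambda>n. F n x)"
  proof (rule summable_comparison_test[where g="\<lambda>n. norm (F n) * norm x"])
    show "\<exists>N. \<forall>n\<ge>N. norm (blinfun_apply (F n) x) \<le> norm (F n) * norm x"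
      using norm_blinfun by blast
    show "summable (\<lambda>n. norm (F n) * norm x)"
      using assms by (rule summable_mult2)
  qed
  have "bounded_linear (\<lambda>S::'a \<Rightarrow>\<^sub>L 'b. S x)" by (rule blinfun.bounded_linear_left)
  then show "(\<Sum>n. F n) x = (\<Sum>n. F n x)"
    using bounded_linear.suminf summable_norm_cancel[OF assms] by blast
qed

lemma neumann:
  fixes A :: "'a::banach \<Rightarrow>\<^sub>L 'a"
  assumes "summable (\<lambda>n. norm (bpow A n))"
  shows "(id_blinfun - A) o\<^sub>L suminf (bpow A) = id_blinfun"
    and "suminf (bpow A) o\<^sub>L (id_blinfun - A) = id_blinfun"
proof -
  note sa = summable_apply[OF assms]
  have sx: "summable (\<lambda>n. bpow A n x)" for x using sa(1) .
  have e2: "(\<Sum>n. bpow A (Suc n) x) = (\<Sum>n. bpow A n x) - x" for x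
    using suminf_split_head[OF sx[of x]] by simp
  have e1: "A (\<Sum>n. bpow A n x) = (\<Sum>n. bpow A n x) - x" for x
  proof -
    have "A (\<Sum>n. bpow A n x) = (\<Sum>n. A (bpow A n x))"
      by (rule bounded_linear.suminf[OF blinfun.bounded_linear_right sx])
    also have "\<dots> = (\<Sum>n. bpow A (Suc n) x)" by simp
    finally show ?thesis using e2 by simp
  qed
  show "(id_blinfun - A) o\<^sub>L suminf (bpow A) = id_blinfun"
    by (rule blinfun_eqI) (simp add: blinfun.bilinear_simps e1 e2 sa(2))
  show "suminf (bpow A) o\<^sub>L (id_blinfun - A) = id_blinfun"
  proof (rule blinfun_eqI)
    fix x
    have "suminf (bpow A) (x - A x) = (\<Sum>n. bpow A n x) - (\<Sum>n. bpow A n (A x))"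
      by (simp add: sa(2) blinfun.bilinear_simps)
    also have "(\<Sum>n. bpow A n (A x)) = (\<Sum>n. bpow A (Suc n) x)"
      by (simp only: bpow_Suc')
    also have "(\<Sum>n. bpow A n x) - (\<Sum>n. bpow A (Suc n) x) = x"
      by (subst e2) simp
    finally have "suminf (bpow A) (x - A x) = x" .
    then show "blinfun_apply (suminf (bpow A) o\<^sub>L (id_blinfun - A)) x = blinfun_apply id_blinfun x"
      by (simp only: blinfun_apply_blinfun_compose blinfun.diff_left blinfun_apply_id_blinfun)
  qed
qed

lemma neumann_pos:
  fixes A :: "'a::banach \<Rightarrow>\<^sub>L 'a"
  assumes "summable (\<lambda>n. norm (bpow A n))" "ordered_cone K" "positive_op K A"
  shows "positive_op K (suminf (bpow A))"
  unfolding positive_op_def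
proof clarify
  fix x assume "x \<in> K"
  have "(\<Sum>n. bpow A n x) \<in> K"
    using cone_suminf[OF assms(2) summable_apply(1)[OF assms(1)]] pos_bpow[OF assms(3) \<open>x \<in> K\<close>]
    by blast
  then show "suminf (bpow A) x \<in> K" by (simp add: summable_apply(2)[OF assms(1)])
qed

lemma summable_small:
  fixes A :: "'a::banach \<Rightarrow>\<^sub>L 'a"
  assumes "norm A < 1"
  shows "summable (\<lambda>n. norm (bpow A n))"
proof (rule summable_comparison_test[where g="\<lambda>n. norm A ^ n"])
  show "\<exists>N. \<forall>n\<ge>N. norm (norm (bpow A n)) \<le> norm A ^ n" using norm_bpow by auto
  show "summable (\<lambda>n. norm A ^ n)" using assms by (intro summable_geometric) simp
qed

lemma norm_suminf_small:
  fixes A :: "'a::banach \<Rightarrow>\<^sub>L 'a"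
  assumes "norm A < 1"
  shows "norm (suminf (bpow A)) \<le> 1 / (1 - norm A)"
proof -
  have s: "summable (\<lambda>n. norm (bpow A n))" by (rule summable_small[OF assms])
  have g: "summable (\<lambda>n. norm A ^ n)" using assms by (intro summable_geometric) simp
  have "norm (suminf (bpow A)) \<le> (\<Sum>n. norm (bpow A n))"
    by (rule summable_norm[OF s])
  also have "\<dots> \<le> (\<Sum>n. norm A ^ n)"
    by (rule suminf_le[OF _ s g]) (simp add: norm_bpow)
  also have "\<dots> = 1 / (1 - norm A)"
    using suminf_geometric[of "norm A"] assms by simp
  finally show ?thesis .
qed

section \<open>Complexification\<close>

lemma bl_cplx: "bounded_linear (\<lambda>p. (blinfun_apply A (fst p), blinfun_apply A (snd p)))"
  by (rule bounded_linear_Pair; rule bounded_linear_compose[OF blinfun.bounded_linear_right];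
      rule bounded_linear_fst bounded_linear_snd)

lemma bl_zm: "bounded_linear (\<lambda>p::'a::real_normed_vector \<times> 'a.
   (a *\<^sub>R fst p - b *\<^sub>R snd p, b *\<^sub>R fst p + a *\<^sub>R snd p))"
proof -
  have f: "bounded_linear (\<lambda>p::'a \<times> 'a. c *\<^sub>R fst p)" "bounded_linear (\<lambda>p::'a \<times> 'a. c *\<^sub>R snd p)" for c
    by (rule bounded_linear_compose[OF bounded_linear_scaleR_right]; rule bounded_linear_fst bounded_linear_snd)+
  show ?thesis
    by (rule bounded_linear_Pair; rule bounded_linear_sub bounded_linear_add; rule f)
qed

definition cplx :: "('a::real_normed_vector \<Rightarrow>\<^sub>L 'a) \<Rightarrow> (('a \<times> 'a) \<Rightarrow>\<^sub>L ('a \<times> 'a))" where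
  "cplx A = Blinfun (\<lambda>p. (A (fst p), A (snd p)))"

definition zm :: "complex \<Rightarrow> (('a::real_normed_vector \<times> 'a) \<Rightarrow>\<^sub>L ('a \<times> 'a))" where
  "zm w = Blinfun (\<lambda>p. (Re w *\<^sub>R fst p - Im w *\<^sub>R snd p, Im w *\<^sub>R fst p + Re w *\<^sub>R snd p))"

lemma cplx_apply: "blinfun_apply (cplx A) p = (A (fst p), A (snd p))"
  unfolding cplx_def using bl_cplx[of A] by (simp add: bounded_linear_Blinfun_apply)

lemma zm_apply: "blinfun_apply (zm w) p = (Re w *\<^sub>R fst p - Im w *\<^sub>R snd p, Im w *\<^sub>R fst p + Re w *\<^sub>R snd p)"
  unfolding zm_def by (subst bounded_linear_Blinfun_apply[OF bl_zm]) simp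

lemma shift_eq: "complexified_shift T z = cplx T - zm z"
proof -
  have e: "(\<lambda>(x, y). (blinfun_apply T x - (Re z *\<^sub>R x - Im z *\<^sub>R y), blinfun_apply T y - (Im z *\<^sub>R x + Re z *\<^sub>R y)))
     = (\<lambda>p. (T (fst p), T (snd p)) - (Re z *\<^sub>R fst p - Im z *\<^sub>R snd p, Im z *\<^sub>R fst p + Re z *\<^sub>R snd p))"
    by (auto simp: fun_eq_iff)
  have "bounded_linear (\<lambda>p. (T (fst p), T (snd p)) - (Re z *\<^sub>R fst p - Im z *\<^sub>R snd p, Im z *\<^sub>R fst p + Re z *\<^sub>R snd p))"
    by (intro bounded_linear_sub bl_cplx bl_zm)
  then show ?thesis
    unfolding complexified_shift_def e
    by (intro blinfun_eqI) (simp add: bounded_linear_Blinfun_apply cplx_apply zm_apply blinfun.bilinear_simps)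
qed

lemma zm_mult: "zm a o\<^sub>L zm b = zm (a * b)"
  by (rule blinfun_eqI) (simp add: zm_apply algebra_simps scaleR_add_left scaleR_diff_left)

lemma zm_one: "zm 1 = id_blinfun"
  by (rule blinfun_eqI) (simp add: zm_apply)

lemma zm_inv: "z \<noteq> 0 \<Longrightarrow> zm z (zm (1/z) p) = p"
  using zm_mult[of z "1/z"] zm_one
  by (metis blinfun_apply_blinfun_compose blinfun_apply_id_blinfun nonzero_mult_div_cancel_left mult_1_right div_by_1 divide_self_if times_divide_eq_right)

lemma zm_inv': "z \<noteq> 0 \<Longrightarrow> zm (1/z) (zm z p) = p"
  using zm_mult[of "1/z" z] zm_one
  by (metis blinfun_apply_blinfun_compose blinfun_apply_id_blinfun divide_self_if times_divide_eq_left mult_1_left)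

lemma cplx_zm_comm: "cplx A o\<^sub>L zm w = zm w o\<^sub>L cplx A"
  by (rule blinfun_eqI) (simp add: zm_apply cplx_apply blinfun.bilinear_simps)

lemma cplx_compose: "cplx A o\<^sub>L cplx B = cplx (A o\<^sub>L B)"
  by (rule blinfun_eqI) (simp add: cplx_apply)

lemma cplx_id: "cplx id_blinfun = id_blinfun"
  by (rule blinfun_eqI) (simp add: cplx_apply)

lemma norm_cplx: "norm (cplx A) \<le> 2 * norm A"
proof (rule norm_blinfun_bound)
  show "0 \<le> 2 * norm A" by simp
  fix p :: "'a \<times> 'a"
  obtain a b where p: "p = (a, b)" by fastforce
  have "norm (cplx A p) \<le> norm (A a) + norm (A b)"
    by (simp add: p cplx_apply norm_Pair_le)
  also have "\<dots> \<le> norm A * norm a + norm A * norm b"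
    by (intro add_mono norm_blinfun)
  also have "\<dots> \<le> norm A * norm p + norm A * norm p"
    by (intro add_mono mult_left_mono) (auto simp: p norm_fst_le norm_snd_le)
  finally show "norm (cplx A p) \<le> 2 * norm A * norm p" by (simp add: mult_ac)
qed

lemma norm_zm: "norm (zm w :: ('a::real_normed_vector \<times> 'a) \<Rightarrow>\<^sub>L ('a \<times> 'a)) \<le> 4 * cmod w"
proof (rule norm_blinfun_bound)
  show "0 \<le> 4 * cmod w" by simp
  fix p :: "'a \<times> 'a"
  obtain a b where p: "p = (a, b)" by fastforce
  have ra: "\<bar>Re w\<bar> \<le> cmod w" "\<bar>Im w\<bar> \<le> cmod w" by (rule abs_Re_le_cmod, rule abs_Im_le_cmod)
  have na: "norm a \<le> norm p" "norm b \<le> norm p" by (auto simp: p norm_fst_le norm_snd_le)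
  have "norm (zm w p) \<le> norm (Re w *\<^sub>R a - Im w *\<^sub>R b) + norm (Im w *\<^sub>R a + Re w *\<^sub>R b)"
    by (simp add: p zm_apply norm_Pair_le)
  also have "\<dots> \<le> (\<bar>Re w\<bar> * norm a + \<bar>Im w\<bar> * norm b) + (\<bar>Im w\<bar> * norm a + \<bar>Re w\<bar> * norm b)"
    by (intro add_mono order_trans[OF norm_triangle_ineq4] order_trans[OF norm_triangle_ineq]) simp_all
  also have "\<dots> \<le> (cmod w * norm p + cmod w * norm p) + (cmod w * norm p + cmod w * norm p)"
    by (intro add_mono mult_mono ra na) auto
  finally show "norm (zm w p) \<le> 4 * cmod w * norm p" by simp
qed

lemma bpow_A:
  "bpow (zm c o\<^sub>L cplx T) n = zm (c ^ n) o\<^sub>L cplx (bpow T n)"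
proof (induction n)
  case 0 then show ?case by (rule blinfun_eqI) (simp add: zm_apply cplx_apply)
next
  case (Suc n)
  show ?case
    by (rule blinfun_eqI) (simp add: Suc zm_apply cplx_apply blinfun.bilinear_simps algebra_simps
        scaleR_add_left scaleR_diff_left)
qed

lemma not_spec:
  fixes T :: "'a::banach \<Rightarrow>\<^sub>L 'a"
  assumes bnd: "\<And>n. norm (bpow T n) \<le> B * \<rho> ^ n" and r0: "0 \<le> \<rho>" and rz: "\<rho> < cmod z"
  shows "z \<notin> op_spectrum T"
proof -
  have z0: "z \<noteq> 0" using r0 rz by auto
  define A :: "('a \<times> 'a) \<Rightarrow>\<^sub>L ('a \<times> 'a)" where "A = zm (1/z) o\<^sub>L cplx T"
  have nA: "norm (bpow A n) \<le> 8 * B * (\<rho> / cmod z) ^ n" for n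
  proof -
    have "norm (bpow A n) \<le> norm (zm ((1/z)^n) :: ('a \<times> 'a) \<Rightarrow>\<^sub>L ('a \<times> 'a)) * norm (cplx (bpow T n))"
      unfolding A_def bpow_A by (rule norm_blinfun_compose)
    also have "\<dots> \<le> (4 * (1 / cmod z) ^ n) * (2 * (B * \<rho> ^ n))"
      by (intro mult_mono order_trans[OF norm_zm] order_trans[OF norm_cplx])
         (auto simp: norm_power norm_divide bnd)
    also have "\<dots> = 8 * B * (\<rho> / cmod z) ^ n"
      by (simp add: power_divide)
    finally show ?thesis .
  qed
  have sA: "summable (\<lambda>n. norm (bpow A n))"
  proof (rule summable_comparison_test[where g="\<lambda>n. 8 * B * (\<rho> / cmod z) ^ n"])
    show "\<exists>N. \<forall>n\<ge>N. norm (norm (bpow A n)) \<le> 8 * B * (\<rho> / cmod z) ^ n" using nA by auto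
    show "summable (\<lambda>n. 8 * B * (\<rho> / cmod z) ^ n)"
    proof -
      have cz: "0 < cmod z" using r0 rz by linarith
      have "\<bar>\<rho> / cmod z\<bar> < 1" using cz rz r0 by (simp add: divide_less_eq)
      then show ?thesis by (intro summable_mult summable_geometric) simp
    qed
  qed
  define S where "S = suminf (bpow A)"
  note N = neumann[OF sA, folded S_def]
  have N1: "(id_blinfun - A) (S p) = p" for p
    using N(1) by (metis blinfun_apply_blinfun_compose blinfun_apply_id_blinfun)
  have N2: "S ((id_blinfun - A) p) = p" for p
    using N(2) by (metis blinfun_apply_blinfun_compose blinfun_apply_id_blinfun)
  define Si where "Si = - (S o\<^sub>L zm (1/z))"
  have Ap: "A p = zm (1/z) (cplx T p)" for p by (simp add: A_def)
  have "Si o\<^sub>L complexified_shift T z = id_blinfun"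
  proof (rule blinfun_eqI)
    fix p
    have "zm (1/z) (cplx T p - zm z p) = - ((id_blinfun - A) p)"
      by (simp add: blinfun.bilinear_simps zm_inv' z0 Ap)
    then have e: "zm (1/z) (cplx T p - zm z p) = - ((id_blinfun - A) p)" .
    have "(Si o\<^sub>L complexified_shift T z) p = - S (zm (1/z) (cplx T p - zm z p))"
      unfolding Si_def shift_eq
      by (simp only: blinfun_apply_blinfun_compose blinfun.minus_left blinfun.diff_left)
    also have "\<dots> = S ((id_blinfun - A) p)"
      unfolding e by (simp only: blinfun.minus_right minus_minus)
    finally show "(Si o\<^sub>L complexified_shift T z) p = id_blinfun p"
      by (simp only: N2 blinfun_apply_id_blinfun)
  qed
  moreover have "complexified_shift T z o\<^sub>L Si = id_blinfun"
  proof (rule blinfun_eqI)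
    fix p :: "'a \<times> 'a"
    define q where "q = zm (1/z) p"
    have "cplx T (S q) = zm z (A (S q))" by (simp add: Ap zm_inv z0)
    then have "cplx T (S q) - zm z (S q) = - zm z ((id_blinfun - A) (S q))"
      by (simp add: blinfun.bilinear_simps)
    also have "\<dots> = - p" by (simp add: N1 q_def zm_inv z0)
    finally show "(complexified_shift T z o\<^sub>L Si) p = id_blinfun p"
      by (simp add: Si_def shift_eq blinfun.bilinear_simps q_def[symmetric])
  qed
  ultimately show ?thesis unfolding op_spectrum_def by blast
qed

lemma spec_bounded:
  fixes T :: "'a::banach \<Rightarrow>\<^sub>L 'a"
  assumes "z \<in> op_spectrum T" shows "cmod z \<le> norm T"
  using not_spec[of T 1 "norm T" z] assms norm_bpow[of T] by force

lemma spec_radius_le: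
  fixes T :: "'a::banach \<Rightarrow>\<^sub>L 'a"
  assumes bnd: "\<And>n. norm (bpow T n) \<le> B * \<rho> ^ n" and r0: "0 \<le> \<rho>"
  shows "spectral_radius T \<le> \<rho>"
proof (cases "op_spectrum T = {}")
  case True then show ?thesis by (simp add: spectral_radius_def r0)
next
  case False
  have "Sup (cmod ` op_spectrum T) \<le> \<rho>"
  proof (rule cSup_least)
    show "cmod ` op_spectrum T \<noteq> {}" using False by simp
    show "x \<le> \<rho>" if "x \<in> cmod ` op_spectrum T" for x
      using that not_spec[OF bnd r0] by force
  qed
  then show ?thesis using False by (simp add: spectral_radius_def)
qed

lemma spec_le_radius:
  fixes T :: "'a::banach \<Rightarrow>\<^sub>L 'a"
  assumes "z \<in> op_spectrum T" shows "cmod z \<le> spectral_radius T"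
proof -
  have "bdd_above (cmod ` op_spectrum T)"
    using spec_bounded[of _ T] by (auto intro!: bdd_aboveI[where M="norm T"])
  then show ?thesis using assms by (auto simp: spectral_radius_def intro!: cSup_upper)
qed

section \<open>Uniform boundedness\<close>

lemma ubp:
  fixes F :: "nat \<Rightarrow> ('a::banach \<Rightarrow>\<^sub>L 'b::real_normed_vector)"
  assumes pw: "\<And>x. \<exists>M. \<forall>n. norm (F n x) \<le> M"
  shows "\<exists>B. \<forall>n. norm (F n) \<le> B"
proof -
  define G where "G m = {x. \<forall>n. norm (F n x) \<le> real m}" for m :: nat
  have clG: "closed (G m)" for m
  proof -
    have "G m = (\<Inter>n. {x. norm (F n x) \<le> real m})" by (auto simp: G_def)
    also have "closed \<dots>"
      by (intro closed_INT ballI closed_Collect_le continuous_intros)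
    finally show ?thesis .
  qed
  have cov: "\<Union> (range G) = UNIV"
  proof safe
    fix x
    obtain M where M: "\<forall>n. norm (F n x) \<le> M" using pw by blast
    obtain m :: nat where "M \<le> real m" using real_arch_simple by blast
    with M have "x \<in> G m" by (auto simp: G_def intro: order_trans)
    then show "x \<in> \<Union> (range G)" by blast
  qed auto
  have "\<exists>m. interior (G m) \<noteq> {}"
  proof (rule ccontr)
    assume "\<not> ?thesis"
    then have "euclidean interior_of \<Union> (range G) = {}"
      by (intro Baire_category_alt) (auto simp: completely_metrizable_space_euclidean clG)
    with cov show False by simp
  qed
  then obtain m x0 where "x0 \<in> interior (G m)" by blast
  then obtain e where e: "e > 0" "ball x0 e \<subseteq> G m" by (auto simp: mem_interior)
  have x0: "x0 \<in> G m" using e by auto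
  have bnd: "norm (F n w) \<le> (4 * real m / e) * norm w" for n w
  proof (cases "w = 0")
    case True then show ?thesis by simp
  next
    case False
    define t where "t = e / (2 * norm w)"
    have t: "t > 0" using e False by (simp add: t_def)
    have "norm (t *\<^sub>R w) = e / 2" using False e by (simp add: t_def)
    then have "x0 + t *\<^sub>R w \<in> ball x0 e" using e by (simp add: dist_norm)
    then have "x0 + t *\<^sub>R w \<in> G m" using e by blast
    then have a: "norm (F n (x0 + t *\<^sub>R w)) \<le> real m" by (simp add: G_def)
    have b: "norm (F n x0) \<le> real m" using x0 by (simp add: G_def)
    have "t * norm (F n w) = norm (F n (x0 + t *\<^sub>R w) - F n x0)"
      using t by (simp add: blinfun.bilinear_simps)
    also have "\<dots> \<le> 2 * real m"
      using a b norm_triangle_ineq4[of "F n (x0 + t *\<^sub>R w)" "F n x0"] by linarith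
    finally have "t * norm (F n w) \<le> 2 * real m" .
    then have "norm (F n w) \<le> 2 * real m / t" using t by (simp add: field_simps)
    also have "2 * real m / t = (4 * real m / e) * norm w"
      using False e by (simp add: t_def field_simps)
    finally show ?thesis .
  qed
  have "norm (F n) \<le> 4 * real m / e" for n
    by (rule norm_blinfun_bound) (use e bnd in auto)
  then show ?thesis by blast
qed

lemma bpow_scale: "bpow (a *\<^sub>R A) n = (a ^ n) *\<^sub>R bpow A n"
  by (induction n) (auto intro!: blinfun_eqI simp: blinfun.bilinear_simps)

lemma iii_imp_i:
  fixes K :: "'a::banach set" and T :: "'a \<Rightarrow>\<^sub>L 'a"
  assumes cone: "ordered_cone K"
    and gen: "generating_cone K"
    and normal: "normal_cone K"
    and pos: "positive_op K T"
    and c0: "c \<ge> 0"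
    and iii: "\<forall>x\<in>K. \<forall>y\<in>K. y - (x - T x) \<in> K \<longrightarrow> norm x \<le> c * norm y"
  shows "spectral_radius T < 1"
proof -
  obtain C where C: "C > 0" "\<And>x y. x \<in> K \<Longrightarrow> y - x \<in> K \<Longrightarrow> norm x \<le> C * norm y"
    using normal unfolding normal_cone_def by blast
  define M where "M = (c + 1) * (norm T + 1)"
  have M0: "0 < M" unfolding M_def using c0 norm_ge_zero[of T] by (intro mult_pos_pos) linarith+
  have cM: "c * norm T \<le> M" unfolding M_def using c0 by (simp add: algebra_simps)
  define \<delta> where "\<delta> = 1 / (2 * M)"
  have d0: "\<delta> > 0" unfolding \<delta>_def using M0 by simp
  have cd: "c * \<delta> * norm T \<le> 1/2"
  proof -
    have "c * \<delta> * norm T = (c * norm T) / (2 * M)" by (simp add: \<delta>_def)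
    also have "\<dots> \<le> M / (2 * M)"
      by (rule divide_right_mono) (use cM M0 in auto)
    also have "\<dots> = 1/2" using M0 by simp
    finally show ?thesis .
  qed
  define T' where "T' = (1 + \<delta>) *\<^sub>R T"
  have posT': "positive_op K T'"
    unfolding positive_op_def
  proof clarify
    fix x assume "x \<in> K"
    then have "T x \<in> K" using pos unfolding positive_op_def by blast
    then show "T' x \<in> K" unfolding T'_def using cone d0 by (simp add: blinfun.bilinear_simps cone_scale)
  qed
  have a: "norm x \<le> 2 * c * norm y" if x: "x \<in> K" and y: "y \<in> K" and le: "y - (x - T' x) \<in> K" for x y
  proof -
    have yK: "y + \<delta> *\<^sub>R T x \<in> K"
      using pos x y d0 cone unfolding positive_op_def by (auto intro!: cone_add cone_scale)
    have eq: "(y + \<delta> *\<^sub>R T x) - (x - T x) = y - (x - T' x)"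
      by (simp add: T'_def blinfun.bilinear_simps algebra_simps)
    have "(y + \<delta> *\<^sub>R T x) - (x - T x) \<in> K" using le by (simp only: eq)
    then have "norm x \<le> c * norm (y + \<delta> *\<^sub>R T x)" using iii x yK by blast
    also have "\<dots> \<le> c * (norm y + \<delta> * (norm T * norm x))"
    proof -
      have h1: "\<delta> * norm (T x) \<le> \<delta> * (norm T * norm x)"
        using d0 norm_blinfun[of T x] by (simp add: mult_left_mono)
      have h2: "norm (y + \<delta> *\<^sub>R T x) \<le> norm y + \<delta> * norm (T x)"
        using norm_triangle_ineq[of y "\<delta> *\<^sub>R T x"] d0 by simp
      show ?thesis using c0 h1 h2 by (intro mult_left_mono) linarith+
    qed
    also have "\<dots> = c * norm y + (c * \<delta> * norm T) * norm x" by (simp add: algebra_simps)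
    also have "\<dots> \<le> c * norm y + (1/2) * norm x"
      using cd by (intro add_left_mono mult_right_mono) auto
    finally show ?thesis by simp
  qed
  have b: "norm (bpow T' n u) \<le> 2 * c * C * norm u" if u: "u \<in> K" for n u
  proof -
    define x where "x = (\<Sum>k\<le>n. bpow T' k u)"
    have tel: "(\<Sum>k\<le>m. bpow T' k u) - T' (\<Sum>k\<le>m. bpow T' k u) = u - bpow T' (Suc m) u" for m
    proof (induction m)
      case 0 then show ?case by simp
    next
      case (Suc m)
      have "(\<Sum>k\<le>Suc m. bpow T' k u) - T' (\<Sum>k\<le>Suc m. bpow T' k u)
          = ((\<Sum>k\<le>m. bpow T' k u) - T' (\<Sum>k\<le>m. bpow T' k u)) + bpow T' (Suc m) u - T' (bpow T' (Suc m) u)"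
        by (simp add: blinfun.bilinear_simps)
      also have "\<dots> = u - bpow T' (Suc (Suc m)) u" using Suc by simp
      finally show ?case .
    qed
    have xK: "x \<in> K" unfolding x_def using cone posT' u by (auto intro!: cone_sum pos_bpow)
    have "u - (x - T' x) = bpow T' (Suc n) u" unfolding x_def tel by simp
    then have "u - (x - T' x) \<in> K" using pos_bpow[OF posT' u, of "Suc n"] by simp
    then have nx: "norm x \<le> 2 * c * norm u" using a xK u by blast
    have "x - bpow T' n u = (\<Sum>k<n. bpow T' k u)"
      unfolding x_def by (simp add: lessThan_Suc_atMost[symmetric])
    then have "x - bpow T' n u \<in> K" using cone posT' u by (auto intro!: cone_sum pos_bpow)
    then have "norm (bpow T' n u) \<le> C * norm x" using C(2) posT' u by (simp add: pos_bpow)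
    also have "\<dots> \<le> C * (2 * c * norm u)" using nx C by (simp add: mult_left_mono)
    finally show ?thesis by (simp add: mult_ac)
  qed
  have pw: "\<exists>M. \<forall>n. norm (bpow T' n w) \<le> M" for w
  proof -
    obtain p q where pq: "p \<in> K" "q \<in> K" "w = p - q"
      using gen unfolding generating_cone_def by blast
    have "norm (bpow T' n w) \<le> 2 * c * C * norm p + 2 * c * C * norm q" for n
    proof -
      have "norm (bpow T' n w) \<le> norm (bpow T' n p) + norm (bpow T' n q)"
        using pq by (simp add: blinfun.bilinear_simps norm_triangle_ineq4)
      then show ?thesis using b[OF pq(1), of n] b[OF pq(2), of n] by linarith
    qed
    then show ?thesis by blast
  qed
  obtain B where B: "\<And>n. norm (bpow T' n) \<le> B" using ubp[OF pw] by blast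
  have B0: "0 \<le> B" using B[of 0] norm_ge_zero order_trans by blast
  define \<rho> where "\<rho> = 1 / (1 + \<delta>)"
  have r: "0 \<le> \<rho>" "\<rho> < 1" using d0 by (auto simp: \<rho>_def)
  have "norm (bpow T n) \<le> B * \<rho> ^ n" for n
  proof -
    have "norm (bpow T' n) = (1 + \<delta>) ^ n * norm (bpow T n)"
      using d0 by (simp add: T'_def bpow_scale)
    then have "(1 + \<delta>) ^ n * norm (bpow T n) \<le> B" using B by metis
    then show ?thesis using d0 by (simp add: \<rho>_def power_divide field_simps)
  qed
  then have "spectral_radius T \<le> \<rho>" by (rule spec_radius_le) (rule r(1))
  then show ?thesis using r by linarith
qed

section \<open>Hahn-Banach type construction of positive functionals\<close>

definition sublin :: "('a::real_vector \<Rightarrow> real) \<Rightarrow> bool" where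
  "sublin q \<longleftrightarrow> (\<forall>a b. q (a + b) \<le> q a + q b) \<and> (\<forall>r a. r > 0 \<longrightarrow> q (r *\<^sub>R a) = r * q a)"

lemma sublin_add: "sublin q \<Longrightarrow> q (a + b) \<le> q a + q b"
  unfolding sublin_def by blast

lemma sublin_scale: "sublin q \<Longrightarrow> r > 0 \<Longrightarrow> q (r *\<^sub>R a) = r * q a"
  unfolding sublin_def by blast

lemma sublin_0: "sublin q \<Longrightarrow> q 0 = 0"
  using sublin_scale[of q 2 0] by simp

lemma sublin_scale0: "sublin q \<Longrightarrow> r \<ge> 0 \<Longrightarrow> q (r *\<^sub>R a) = r * q a"
  by (cases "r = 0") (auto simp: sublin_0 sublin_scale)

lemma sublin_neg: "sublin q \<Longrightarrow> - q (- a) \<le> q a"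
  using sublin_add[of q a "- a"] sublin_0[of q] by simp

definition qext :: "('a::real_vector \<Rightarrow> real) \<Rightarrow> 'a \<Rightarrow> 'a \<Rightarrow> real" where
  "qext q w v = (INF t\<in>{0..}. q (v + t *\<^sub>R w) - t * q w)"

lemma qext_bdd:
  assumes "sublin q" shows "bdd_below ((\<lambda>t. q (v + t *\<^sub>R w) - t * q w) ` {0..})"
proof (rule bdd_belowI2[where m="- q (- v)"])
  fix t :: real assume "t \<in> {0..}"
  then have t: "t \<ge> 0" by simp
  have "q (t *\<^sub>R w) \<le> q (v + t *\<^sub>R w) + q (- v)"
    using sublin_add[OF assms, of "v + t *\<^sub>R w" "- v"] by simp
  then show "- q (- v) \<le> q (v + t *\<^sub>R w) - t * q w"
    using sublin_scale0[OF assms t, of w] by simp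
qed

lemma qext_lower: "sublin q \<Longrightarrow> t \<ge> 0 \<Longrightarrow> qext q w v \<le> q (v + t *\<^sub>R w) - t * q w"
  unfolding qext_def by (rule cINF_lower[OF qext_bdd]) auto

lemma qext_greatest: "(\<And>t. t \<ge> 0 \<Longrightarrow> m \<le> q (v + t *\<^sub>R w) - t * q w) \<Longrightarrow> m \<le> qext q w v"
  unfolding qext_def by (rule cINF_greatest) auto

lemma qext_le: "sublin q \<Longrightarrow> qext q w v \<le> q v"
  using qext_lower[of q 0 w v] by simp

lemma qext_neg: "sublin q \<Longrightarrow> qext q w (- w) \<le> - q w"
  using qext_lower[of q 1 w "- w"] sublin_0[of q] by simp

lemma qext_sublin:
  assumes q: "sublin q" shows "sublin (qext q w)"
  unfolding sublin_def
proof (intro conjI allI impI)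
  fix a b
  have "qext q w (a + b) - (q (b + t *\<^sub>R w) - t * q w) \<le> qext q w a" if t: "t \<ge> 0" for t
  proof (rule qext_greatest)
    fix s :: real assume s: "s \<ge> 0"
    have "qext q w (a + b) \<le> q ((a + b) + (s + t) *\<^sub>R w) - (s + t) * q w"
      using qext_lower[OF q] s t by simp
    also have "q ((a + b) + (s + t) *\<^sub>R w) \<le> q (a + s *\<^sub>R w) + q (b + t *\<^sub>R w)"
      using sublin_add[OF q, of "a + s *\<^sub>R w" "b + t *\<^sub>R w"] by (simp add: algebra_simps scaleR_add_left)
    finally show "qext q w (a + b) - (q (b + t *\<^sub>R w) - t * q w) \<le> q (a + s *\<^sub>R w) - s * q w"
      by (simp add: algebra_simps)
  qed
  then have "qext q w (a + b) - qext q w a \<le> q (b + t *\<^sub>R w) - t * q w" if "t \<ge> 0" for t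
    using that by force
  then have "qext q w (a + b) - qext q w a \<le> qext q w b" by (rule qext_greatest)
  then show "qext q w (a + b) \<le> qext q w a + qext q w b" by simp
next
  fix r :: real and a assume r: "r > 0"
  have "qext q w (r *\<^sub>R a) / r \<le> qext q w a"
  proof (rule qext_greatest)
    fix t :: real assume t: "t \<ge> 0"
    have "qext q w (r *\<^sub>R a) \<le> q (r *\<^sub>R a + (r * t) *\<^sub>R w) - (r * t) * q w"
      using qext_lower[OF q] r t by simp
    also have "q (r *\<^sub>R a + (r * t) *\<^sub>R w) = r * q (a + t *\<^sub>R w)"
      using sublin_scale[OF q r, of "a + t *\<^sub>R w"] by (simp add: scaleR_add_right)
    finally have "qext q w (r *\<^sub>R a) \<le> r * (q (a + t *\<^sub>R w) - t * q w)"
      by (simp add: algebra_simps)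
    then show "qext q w (r *\<^sub>R a) / r \<le> q (a + t *\<^sub>R w) - t * q w"
      using r by (simp add: divide_le_eq mult.commute)
  qed
  then have le1: "qext q w (r *\<^sub>R a) \<le> r * qext q w a" using r by (simp add: divide_le_eq mult.commute)
  have "r * qext q w a \<le> qext q w (r *\<^sub>R a)"
  proof (rule qext_greatest)
    fix t :: real assume t: "t \<ge> 0"
    have "qext q w a \<le> q (a + (t / r) *\<^sub>R w) - (t / r) * q w"
      using qext_lower[OF q, of "t / r" w a] r t by simp
    then have "r * qext q w a \<le> r * (q (a + (t / r) *\<^sub>R w) - (t / r) * q w)"
      using r by (simp add: mult_left_mono)
    also have "\<dots> = r * q (a + (t / r) *\<^sub>R w) - t * q w" using r by (simp add: algebra_simps)
    also have "r * q (a + (t / r) *\<^sub>R w) = q (r *\<^sub>R a + t *\<^sub>R w)"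
      using sublin_scale[OF q r, of "a + (t / r) *\<^sub>R w"] r by (simp add: scaleR_add_right)
    finally show "r * qext q w a \<le> q (r *\<^sub>R a + t *\<^sub>R w) - t * q w" .
  qed
  with le1 show "qext q w (r *\<^sub>R a) = r * qext q w a" by simp
qed

lemma minimal_sublin_linear:
  assumes q: "sublin q" and min: "\<And>w. qext q w = q"
  shows "q (a + b) = q a + q b" "q (r *\<^sub>R a) = r * q a"
proof -
  have neg: "q (- w) = - q w" for w
  proof -
    have "q (- w) \<le> - q w" using qext_neg[OF q, of w] min[of w] by simp
    moreover have "- q w \<le> q (- w)" using sublin_neg[OF q, of "- w"] by simp
    ultimately show ?thesis by simp
  qed
  have "q a + q b = - q (- a) - q (- b)" by (simp add: neg)
  also have "\<dots> \<le> - q (- a - b)" using sublin_add[OF q, of "- a" "- b"] by simp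
  also have "\<dots> = q (a + b)" using neg[of "a + b"] by simp
  finally show "q (a + b) = q a + q b" using sublin_add[OF q, of a b] by simp
  show "q (r *\<^sub>R a) = r * q a"
  proof (cases "r \<ge> 0")
    case True then show ?thesis by (rule sublin_scale0[OF q])
  next
    case False
    have "q (r *\<^sub>R a) = q (- ((- r) *\<^sub>R a))" by simp
    also have "\<dots> = - q ((- r) *\<^sub>R a)" by (rule neg)
    also have "\<dots> = r * q a" using sublin_scale[OF q, of "- r" a] False by simp
    finally show ?thesis .
  qed
qed

lemma exists_minimal_sublin:
  fixes p :: "'a::real_vector \<Rightarrow> real"
  assumes p: "sublin p"
  shows "\<exists>m. sublin m \<and> (\<forall>v. m v \<le> p v) \<and> m (- x) \<le> - p x \<and>
     (\<forall>a b. m (a + b) = m a + m b) \<and> (\<forall>r a. m (r *\<^sub>R a) = r * m a)"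
proof -
  define A where "A = {q. sublin q \<and> (\<forall>v. q v \<le> p v) \<and> q (- x) \<le> - p x}"
  define P where "P = (\<lambda>q1 q2::'a \<Rightarrow> real. \<forall>v. q2 v \<le> q1 v)"
  have px: "qext p x \<in> A"
    unfolding A_def using qext_sublin[OF p] qext_le[OF p] qext_neg[OF p] by auto
  have po: "partial_order_on A (relation_of P A)"
  proof (rule partial_order_on_relation_ofI)
    show "P a a" if "a \<in> A" for a by (simp add: P_def)
    show "P a c" if "a \<in> A" "b \<in> A" "c \<in> A" "P a b" "P b c" for a b c
      using that unfolding P_def by (meson order_trans)
    show "a = b" if "a \<in> A" "b \<in> A" "P a b" "P b a" for a b
      using that unfolding P_def by (intro ext antisym) auto
  qed
  have ch: "\<exists>u\<in>A. \<forall>a\<in>C. P a u" if C: "C \<in> Chains (relation_of P A)" for C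
  proof (cases "C = {}")
    case True then show ?thesis using px by blast
  next
    case False
    have CA: "C \<subseteq> A" using C unfolding Chains_def relation_of_def by blast
    have cmp: "P a b \<or> P b a" if "a \<in> C" "b \<in> C" for a b
      using C that unfolding Chains_def relation_of_def by blast
    define u where "u v = (INF q\<in>C. q v)" for v
    have bdd: "bdd_below ((\<lambda>q. q v) ` C)" for v
    proof (rule bdd_belowI2[where m="- p (- v)"])
      fix q assume "q \<in> C"
      then have "sublin q" "q (- v) \<le> p (- v)" using CA by (auto simp: A_def)
      then show "- p (- v) \<le> q v" using sublin_neg[of q v] by simp
    qed
    have lower: "u v \<le> q v" if "q \<in> C" for q v
      unfolding u_def using that by (rule cINF_lower[OF bdd])
    have greatest: "m \<le> u v" if "\<And>q. q \<in> C \<Longrightarrow> m \<le> q v" for m v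
      unfolding u_def using False that by (rule cINF_greatest)
    obtain q0 where q0: "q0 \<in> C" using False by blast
    have sub: "sublin u"
      unfolding sublin_def
    proof (intro conjI allI impI)
      fix a b
      have "u (a + b) - q2 b \<le> u a" if q2: "q2 \<in> C" for q2
      proof (rule greatest)
        fix q1 assume q1: "q1 \<in> C"
        have "u (a + b) \<le> q1 a + q2 b"
        proof (cases "P q1 q2")
          case True
          then have "u (a + b) \<le> q2 (a + b)" using lower q2 by blast
          also have "\<dots> \<le> q2 a + q2 b" using q2 CA by (auto simp: A_def sublin_add)
          also have "\<dots> \<le> q1 a + q2 b" using True by (simp add: P_def)
          finally show ?thesis .
        next
          case False
          then have Pq: "P q2 q1" using cmp q1 q2 by blast
          have "u (a + b) \<le> q1 (a + b)" using lower q1 by blast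
          also have "\<dots> \<le> q1 a + q1 b" using q1 CA by (auto simp: A_def sublin_add)
          also have "\<dots> \<le> q1 a + q2 b" using Pq by (simp add: P_def)
          finally show ?thesis .
        qed
        then show "u (a + b) - q2 b \<le> q1 a" by simp
      qed
      then have "u (a + b) - u a \<le> q2 b" if "q2 \<in> C" for q2 using that by force
      then have "u (a + b) - u a \<le> u b" by (rule greatest)
      then show "u (a + b) \<le> u a + u b" by simp
    next
      fix r :: real and a assume r: "r > 0"
      have sq: "q (r *\<^sub>R a) = r * q a" if "q \<in> C" for q
        using that CA r by (auto simp: A_def sublin_scale)
      have "u (r *\<^sub>R a) / r \<le> u a"
      proof (rule greatest)
        fix q assume q: "q \<in> C"
        have "u (r *\<^sub>R a) \<le> r * q a" using lower[OF q, of "r *\<^sub>R a"] sq[OF q] by simp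
        then show "u (r *\<^sub>R a) / r \<le> q a" using r by (simp add: divide_le_eq mult.commute)
      qed
      then have le1: "u (r *\<^sub>R a) \<le> r * u a" using r by (simp add: divide_le_eq mult.commute)
      have "r * u a \<le> u (r *\<^sub>R a)"
      proof (rule greatest)
        fix q assume q: "q \<in> C"
        have "r * u a \<le> r * q a" using lower[OF q, of a] r by (simp add: mult_left_mono)
        then show "r * u a \<le> q (r *\<^sub>R a)" using sq[OF q] by simp
      qed
      with le1 show "u (r *\<^sub>R a) = r * u a" by simp
    qed
    have "u \<in> A"
      unfolding A_def
    proof (intro CollectI conjI allI sub)
      have "q0 \<in> A" using q0 CA by blast
      then have "q0 v \<le> p v" "q0 (- x) \<le> - p x" for v by (simp_all add: A_def)
      then show "u v \<le> p v" "u (- x) \<le> - p x" for v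
        using lower[OF q0, of v] lower[OF q0, of "- x"] by (blast intro: order_trans)+
    qed
    moreover have "\<forall>a\<in>C. P a u" using lower by (simp add: P_def)
    ultimately show ?thesis by blast
  qed
  obtain m where m: "m \<in> A" and mmin: "\<And>a. a \<in> A \<Longrightarrow> P m a \<Longrightarrow> a = m"
    using predicate_Zorn[OF po ch] by blast
  have msub: "sublin m" using m by (simp add: A_def)
  have "qext m w = m" for w
  proof (rule mmin)
    show "qext m w \<in> A"
      unfolding A_def using qext_sublin[OF msub] qext_le[OF msub, of w] m
      by (auto simp: A_def intro: order_trans)
    show "P m (qext m w)" using qext_le[OF msub] by (simp add: P_def)
  qed
  then have lin: "m (a + b) = m a + m b" "m (r *\<^sub>R a) = r * m a" for a b r
    using minimal_sublin_linear[OF msub] by blast+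
  show ?thesis using m lin by (auto simp: A_def)
qed

definition pdist :: "'a::real_normed_vector set \<Rightarrow> 'a \<Rightarrow> real" where
  "pdist K w = (INF k\<in>K. norm (w + k))"

lemma pdist_lower: "k \<in> K \<Longrightarrow> pdist K w \<le> norm (w + k)"
  unfolding pdist_def by (rule cINF_lower) (auto intro: bdd_belowI2[where m=0])

lemma pdist_greatest: "K \<noteq> {} \<Longrightarrow> (\<And>k. k \<in> K \<Longrightarrow> m \<le> norm (w + k)) \<Longrightarrow> m \<le> pdist K w"
  unfolding pdist_def by (rule cINF_greatest)

lemma pdist_sublin:
  assumes cone: "ordered_cone K" shows "sublin (pdist K)"
  unfolding sublin_def
proof (intro conjI allI impI)
  have ne: "K \<noteq> {}" using cone_0[OF cone] by blast
  fix a b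
  have "pdist K (a + b) - norm (b + k2) \<le> pdist K a" if k2: "k2 \<in> K" for k2
  proof (rule pdist_greatest[OF ne])
    fix k1 assume k1: "k1 \<in> K"
    have "pdist K (a + b) \<le> norm ((a + b) + (k1 + k2))"
      using cone_add[OF cone k1 k2] by (rule pdist_lower)
    also have "\<dots> \<le> norm (a + k1) + norm (b + k2)"
      using norm_triangle_ineq[of "a + k1" "b + k2"] by (simp add: algebra_simps)
    finally show "pdist K (a + b) - norm (b + k2) \<le> norm (a + k1)" by simp
  qed
  then have "pdist K (a + b) - pdist K a \<le> norm (b + k2)" if "k2 \<in> K" for k2
    using that by force
  then have "pdist K (a + b) - pdist K a \<le> pdist K b" by (rule pdist_greatest[OF ne])
  then show "pdist K (a + b) \<le> pdist K a + pdist K b" by simp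
next
  have ne: "K \<noteq> {}" using cone_0[OF cone] by blast
  fix r :: real and a assume r: "r > 0"
  have "pdist K (r *\<^sub>R a) / r \<le> pdist K a"
  proof (rule pdist_greatest[OF ne])
    fix k assume k: "k \<in> K"
    have "pdist K (r *\<^sub>R a) \<le> norm (r *\<^sub>R a + r *\<^sub>R k)"
      using cone_scale[OF cone _ k, of r] r by (intro pdist_lower) simp
    also have "\<dots> = r * norm (a + k)" using r by (simp add: scaleR_add_right[symmetric])
    finally show "pdist K (r *\<^sub>R a) / r \<le> norm (a + k)" using r by (simp add: divide_le_eq mult.commute)
  qed
  then have le1: "pdist K (r *\<^sub>R a) \<le> r * pdist K a" using r by (simp add: divide_le_eq mult.commute)
  have "r * pdist K a \<le> pdist K (r *\<^sub>R a)"
  proof (rule pdist_greatest[OF ne])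
    fix k assume k: "k \<in> K"
    have "pdist K a \<le> norm (a + (1/r) *\<^sub>R k)"
      using cone_scale[OF cone _ k, of "1/r"] r by (intro pdist_lower) simp
    then have "r * pdist K a \<le> r * norm (a + (1/r) *\<^sub>R k)" using r by (simp add: mult_left_mono)
    also have "\<dots> = norm (r *\<^sub>R a + k)"
    proof -
      have eq: "r *\<^sub>R a + k = r *\<^sub>R (a + (1/r) *\<^sub>R k)" using r by (simp add: scaleR_add_right)
      show ?thesis using r by (simp only: eq norm_scaleR abs_of_pos)
    qed
    finally show "r * pdist K a \<le> norm (r *\<^sub>R a + k)" .
  qed
  with le1 show "pdist K (r *\<^sub>R a) = r * pdist K a" by simp
qed

lemma pos_functional:
  fixes K :: "'a::banach set"
  assumes cone: "ordered_cone K" and C: "C > 0" "\<And>x y. x \<in> K \<Longrightarrow> y - x \<in> K \<Longrightarrow> norm x \<le> C * norm y"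
    and x: "x \<in> K"
  shows "\<exists>\<phi>. bounded_linear \<phi> \<and> (\<forall>w. \<bar>\<phi> w\<bar> \<le> norm w) \<and> (\<forall>k\<in>K. \<phi> k \<ge> 0) \<and> \<phi> x \<ge> norm x / C"
proof -
  have ne: "K \<noteq> {}" using cone_0[OF cone] by blast
  obtain m where m: "sublin m" "\<And>v. m v \<le> pdist K v" "m (- x) \<le> - pdist K x"
      "\<And>a b. m (a + b) = m a + m b" "\<And>r a. m (r *\<^sub>R a) = r * m a"
    using exists_minimal_sublin[OF pdist_sublin[OF cone], of x] by blast
  have neg: "m (- w) = - m w" for w using m(5)[of "-1" w] by simp
  have le_norm: "m v \<le> norm v" for v
    using m(2)[of v] pdist_lower[OF cone_0[OF cone], of v] by simp
  have bnd: "\<bar>m w\<bar> \<le> norm w" for w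
    using le_norm[of w] le_norm[of "- w"] neg[of w] by (simp add: abs_le_iff)
  have "bounded_linear m"
    by (rule bounded_linear_intro[where K=1]) (use m(4,5) bnd in auto)
  moreover have "m k \<ge> 0" if k: "k \<in> K" for k
  proof -
    have "m (- k) \<le> pdist K (- k)" by (rule m(2))
    also have "\<dots> \<le> norm (- k + k)" by (rule pdist_lower[OF k])
    finally show ?thesis using neg[of k] by simp
  qed
  moreover have "m x \<ge> norm x / C"
  proof -
    have "norm x / C \<le> pdist K x"
    proof (rule pdist_greatest[OF ne])
      fix k assume k: "k \<in> K"
      have "norm x \<le> C * norm (x + k)" using C(2)[OF x] k by simp
      then show "norm x / C \<le> norm (x + k)" using C(1) by (simp add: divide_le_eq mult.commute)
    qed
    also have "\<dots> \<le> m x" using m(3) neg[of x] by simp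
    finally show ?thesis .
  qed
  ultimately show ?thesis using bnd by blast
qed

section \<open>Real resolvents\<close>

definition inv_at :: "('a::real_normed_vector \<Rightarrow>\<^sub>L 'a) \<Rightarrow> real \<Rightarrow> ('a \<Rightarrow>\<^sub>L 'a) \<Rightarrow> bool" where
  "inv_at T l R \<longleftrightarrow> (\<forall>x. R (l *\<^sub>R x - T x) = x) \<and> (\<forall>x. l *\<^sub>R R x - T (R x) = x)"

lemma inv_at_unique:
  assumes "inv_at T l R1" "inv_at T l R2" shows "R1 = R2"
proof (rule blinfun_eqI)
  fix x
  have "R1 x = R1 (l *\<^sub>R R2 x - T (R2 x))" using assms(2) by (simp add: inv_at_def)
  also have "\<dots> = R2 x" using assms(1) by (simp add: inv_at_def)
  finally show "R1 x = R2 x" .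
qed

lemma from_spec:
  fixes T :: "'a::banach \<Rightarrow>\<^sub>L 'a"
  assumes "complex_of_real l \<notin> op_spectrum T"
  shows "\<exists>R. inv_at T l R"
proof -
  obtain S where S: "S o\<^sub>L complexified_shift T (complex_of_real l) = id_blinfun"
    "complexified_shift T (complex_of_real l) o\<^sub>L S = id_blinfun"
    using assms unfolding op_spectrum_def by blast
  have sh: "complexified_shift T (complex_of_real l) p = (T (fst p) - l *\<^sub>R fst p, T (snd p) - l *\<^sub>R snd p)" for p
    by (simp add: shift_eq cplx_apply zm_apply blinfun.bilinear_simps)
  have S1: "S (complexified_shift T (complex_of_real l) p) = p" for p
    using S(1) by (metis blinfun_apply_blinfun_compose blinfun_apply_id_blinfun)
  have S2: "complexified_shift T (complex_of_real l) (S p) = p" for p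
    using S(2) by (metis blinfun_apply_blinfun_compose blinfun_apply_id_blinfun)
  have bl: "bounded_linear (\<lambda>x. - fst (S (x, 0)))"
    by (intro bounded_linear_minus bounded_linear_compose[OF bounded_linear_fst]
        bounded_linear_compose[OF blinfun.bounded_linear_right]
        bounded_linear_Pair bounded_linear_ident bounded_linear_zero)
  define R where "R = Blinfun (\<lambda>x. - fst (S (x, 0)))"
  have Ra: "R x = - fst (S (x, 0))" for x unfolding R_def using bl by (simp add: bounded_linear_Blinfun_apply)
  have "R (l *\<^sub>R x - T x) = x" for x
  proof -
    have "(l *\<^sub>R x - T x, 0::'a) = - complexified_shift T (complex_of_real l) (x, 0)"
      by (simp add: sh)
    then have "S (l *\<^sub>R x - T x, 0) = - (x, 0)"
      by (simp add: blinfun.bilinear_simps S1)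
    then show ?thesis by (simp add: Ra)
  qed
  moreover have "l *\<^sub>R R x - T (R x) = x" for x
  proof -
    have "fst (complexified_shift T (complex_of_real l) (S (x, 0))) = x" by (simp add: S2)
    then show ?thesis by (simp add: sh Ra blinfun.bilinear_simps algebra_simps)
  qed
  ultimately show ?thesis unfolding inv_at_def by blast
qed

lemma pos_compose: "positive_op K A \<Longrightarrow> positive_op K B \<Longrightarrow> positive_op K (A o\<^sub>L B)"
  unfolding positive_op_def by auto

lemma step_gen:
  fixes T :: "'a::banach \<Rightarrow>\<^sub>L 'a"
  assumes R: "inv_at T l R" and d: "\<bar>d\<bar> * norm R < 1"
  shows "\<exists>R'. inv_at T (l - d) R' \<and> norm R' \<le> norm R / (1 - \<bar>d\<bar> * norm R) \<and>
     (d \<ge> 0 \<longrightarrow> ordered_cone K \<longrightarrow> positive_op K R \<longrightarrow> positive_op K R')"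
proof -
  define A where "A = d *\<^sub>R R"
  have nA: "norm A < 1" using d by (simp add: A_def)
  have sA: "summable (\<lambda>n. norm (bpow A n))" by (rule summable_small[OF nA])
  define N where "N = suminf (bpow A)"
  note NN = neumann[OF sA, folded N_def]
  have N1: "N (x - A x) = x" for x
    using NN(2) by (metis blinfun_apply_blinfun_compose blinfun_apply_id_blinfun blinfun.diff_left)
  have N2: "N x - A (N x) = x" for x
    using NN(1) by (metis blinfun_apply_blinfun_compose blinfun_apply_id_blinfun blinfun.diff_left)
  have Q1: "R (l *\<^sub>R x - T x) = x" and Q2: "l *\<^sub>R R x - T (R x) = x" for x
    using R by (auto simp: inv_at_def)
  define R' where "R' = R o\<^sub>L N"
  have "inv_at T (l - d) R'"
    unfolding inv_at_def
  proof (intro conjI allI)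
    fix x
    have Ae: "A (l *\<^sub>R x - T x) = d *\<^sub>R x" by (simp only: A_def blinfun.scaleR_left Q1)
    have eq: "(l - d) *\<^sub>R x - T x = (l *\<^sub>R x - T x) - A (l *\<^sub>R x - T x)"
      unfolding Ae by (simp add: algebra_simps)
    show "R' ((l - d) *\<^sub>R x - T x) = x" by (simp only: R'_def blinfun_apply_blinfun_compose eq N1 Q1)
  next
    fix x
    have "(l - d) *\<^sub>R R' x - T (R' x) = (l *\<^sub>R R (N x) - T (R (N x))) - d *\<^sub>R R (N x)"
      by (simp add: R'_def algebra_simps)
    also have "\<dots> = N x - A (N x)" by (simp add: Q2 A_def blinfun.scaleR_left)
    finally show "(l - d) *\<^sub>R R' x - T (R' x) = x" by (simp add: N2)
  qed
  moreover have "norm R' \<le> norm R / (1 - \<bar>d\<bar> * norm R)"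
  proof -
    have "norm R' \<le> norm R * norm N" unfolding R'_def by (rule norm_blinfun_compose)
    also have "\<dots> \<le> norm R * (1 / (1 - norm A))"
      unfolding N_def by (intro mult_left_mono norm_suminf_small nA) simp
    finally show ?thesis by (simp add: A_def)
  qed
  moreover have "positive_op K R'" if "d \<ge> 0" "ordered_cone K" "positive_op K R"
  proof -
    have "positive_op K A"
      using that unfolding positive_op_def A_def by (auto simp: cone_scale blinfun.scaleR_left)
    then have "positive_op K N" unfolding N_def by (rule neumann_pos[OF sA that(2)])
    then show ?thesis unfolding R'_def by (rule pos_compose[OF that(3)])
  qed
  ultimately show ?thesis by blast
qed

lemma big_inv:
  fixes T :: "'a::banach \<Rightarrow>\<^sub>L 'a"
  assumes l: "l > norm T" and cone: "ordered_cone K" and pos: "positive_op K T"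
  shows "\<exists>R. inv_at T l R \<and> positive_op K R"
proof -
  have l0: "l > 0" using l norm_ge_zero[of T] by linarith
  define A where "A = (1 / l) *\<^sub>R T"
  have nA: "norm A < 1" using l l0 by (simp add: A_def divide_less_eq)
  have sA: "summable (\<lambda>n. norm (bpow A n))" by (rule summable_small[OF nA])
  define N where "N = suminf (bpow A)"
  note NN = neumann[OF sA, folded N_def]
  have N1: "N (x - A x) = x" for x
    using NN(2) by (metis blinfun_apply_blinfun_compose blinfun_apply_id_blinfun blinfun.diff_left)
  have N2: "N x - A (N x) = x" for x
    using NN(1) by (metis blinfun_apply_blinfun_compose blinfun_apply_id_blinfun blinfun.diff_left)
  define R where "R = (1 / l) *\<^sub>R N"
  have "inv_at T l R"
    unfolding inv_at_def
  proof (intro conjI allI)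
    fix x
    have eq: "l *\<^sub>R x - T x = l *\<^sub>R (x - A x)" using l0 by (simp add: A_def algebra_simps blinfun.scaleR_left)
    have "R (l *\<^sub>R x - T x) = (1/l) *\<^sub>R N (l *\<^sub>R (x - A x))" by (simp only: eq R_def blinfun.scaleR_left)
    also have "\<dots> = x" using l0 by (simp add: blinfun.scaleR_right N1)
    finally show "R (l *\<^sub>R x - T x) = x" .
  next
    fix x
    have "l *\<^sub>R R x - T (R x) = N x - A (N x)" using l0
      by (simp add: R_def A_def blinfun.bilinear_simps algebra_simps)
    then show "l *\<^sub>R R x - T (R x) = x" by (simp add: N2)
  qed
  moreover have "positive_op K R"
  proof -
    have "positive_op K A"
      using pos l0 unfolding positive_op_def A_def by (auto simp: cone_scale[OF cone] blinfun.scaleR_left)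
    then have "positive_op K N" unfolding N_def by (rule neumann_pos[OF sA cone])
    then show ?thesis using l0 unfolding positive_op_def R_def by (auto simp: cone_scale[OF cone] blinfun.scaleR_left)
  qed
  ultimately show ?thesis by blast
qed

lemma i_imp_R:
  fixes T :: "'a::banach \<Rightarrow>\<^sub>L 'a"
  assumes cone: "ordered_cone K" and pos: "positive_op K T" and i: "spectral_radius T < 1"
  shows "\<exists>R. inv_at T 1 R \<and> positive_op K R"
proof -
  have inv: "\<exists>R. inv_at T l R" if "l \<ge> 1" for l
  proof (rule from_spec)
    show "complex_of_real l \<notin> op_spectrum T"
      using spec_le_radius[of "complex_of_real l" T] i that by auto
  qed
  define good where "good l = (\<exists>R. inv_at T l R \<and> positive_op K R)" for l
  define S where "S = {l. l \<ge> 1 \<and> (\<forall>\<mu>\<ge>l. good \<mu>)}"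
  have L0: "max 1 (norm T + 1) \<in> S"
    unfolding S_def good_def using big_inv[OF _ cone pos] by auto
  have Sne: "S \<noteq> {}" using L0 by blast
  have Sbdd: "bdd_below S" unfolding S_def by (auto intro: bdd_belowI[where m=1])
  define s where "s = Inf S"
  have s1: "s \<ge> 1" unfolding s_def using Sne by (intro cInf_greatest) (auto simp: S_def)
  obtain Rs where Rs: "inv_at T s Rs" using inv[OF s1] by blast
  define M where "M = norm Rs + 1"
  have M0: "M > 0" by (simp add: M_def add_nonneg_pos)
  define \<mu>0 where "\<mu>0 = s + 1 / (4 * M)"
  have "s < \<mu>0" using M0 by (simp add: \<mu>0_def)
  then obtain l where l: "l \<in> S" "l < \<mu>0" using cInf_lessD[OF Sne] unfolding s_def by blast
  have goodabove: "good \<mu>" if "\<mu> \<ge> \<mu>0" for \<mu> using l that unfolding S_def by auto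
  have d1: "\<bar>- (1 / (4 * M))\<bar> * norm Rs < 1"
  proof -
    have "\<bar>- (1 / (4 * M))\<bar> * norm Rs = norm Rs / (4 * M)" using M0 by simp
    also have "\<dots> \<le> 1 / 4" using M0 by (simp add: M_def divide_le_eq)
    finally show ?thesis by simp
  qed
  obtain R1 where R1: "inv_at T \<mu>0 R1" "norm R1 \<le> norm Rs / (1 - \<bar>- (1 / (4 * M))\<bar> * norm Rs)"
    using step_gen[OF Rs d1, of K] unfolding \<mu>0_def by auto
  have nR1: "norm R1 \<le> 2 * M"
  proof -
    have a: "\<bar>- (1 / (4 * M))\<bar> * norm Rs \<le> 1 / 2"
    proof -
      have "\<bar>- (1 / (4 * M))\<bar> * norm Rs = norm Rs / (4 * M)" using M0 by simp
      also have "\<dots> \<le> 1 / 2" using M0 by (simp add: M_def divide_le_eq)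
      finally show ?thesis .
    qed
    have "norm Rs / (1 - \<bar>- (1 / (4 * M))\<bar> * norm Rs) \<le> norm Rs / (1 / 2)"
      using a by (intro divide_left_mono) auto
    also have "\<dots> \<le> 2 * M" by (simp add: M_def)
    finally show ?thesis using R1(2) by linarith
  qed
  have R1pos: "positive_op K R1"
    using goodabove[of \<mu>0] R1(1) inv_at_unique unfolding good_def by blast
  define \<nu>0 where "\<nu>0 = max 1 (s - 1 / (8 * M))"
  have goodmid: "good \<nu>" if "\<nu>0 \<le> \<nu>" "\<nu> \<le> \<mu>0" for \<nu>
  proof -
    define d where "d = \<mu>0 - \<nu>"
    have d0: "d \<ge> 0" using that by (simp add: d_def)
    have dle: "d \<le> 3 / (8 * M)" using that by (simp add: d_def \<mu>0_def \<nu>0_def)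
    have "\<bar>d\<bar> * norm R1 \<le> (3 / (8 * M)) * (2 * M)"
      using d0 dle nR1 M0 by (intro mult_mono) auto
    also have "\<dots> = 3 / 4" using M0 by simp
    finally have dd: "\<bar>d\<bar> * norm R1 < 1" by simp
    obtain R' where "inv_at T (\<mu>0 - d) R'" "positive_op K R'"
      using step_gen[OF R1(1) dd, of K] d0 cone R1pos by blast
    then show ?thesis unfolding good_def d_def by auto
  qed
  have "\<nu>0 \<in> S"
    unfolding S_def
  proof (intro CollectI conjI allI impI)
    show "1 \<le> \<nu>0" by (simp add: \<nu>0_def)
    fix \<mu> assume "\<nu>0 \<le> \<mu>"
    then show "good \<mu>" using goodabove goodmid by (cases "\<mu> \<le> \<mu>0") auto
  qed
  then have "s \<le> \<nu>0" unfolding s_def using Sbdd by (rule cInf_lower)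
  then have "\<nu>0 = 1" using M0 by (auto simp: \<nu>0_def max_def split: if_splits)
  then have "good 1" using \<open>\<nu>0 \<in> S\<close> unfolding S_def by auto
  then show ?thesis unfolding good_def .
qed

lemma cone_suminf_minus:
  assumes cone: "ordered_cone K" and s: "summable f" and f: "\<And>n. f n \<in> K"
  shows "suminf f - f m \<in> K"
proof (rule Lim_in_closed_set[OF cone_closed[OF cone]])
  show "\<forall>\<^sub>F N in sequentially. (\<Sum>i<N. f i) - f m \<in> K"
    using eventually_gt_at_top[of m]
  proof (rule eventually_mono)
    fix N assume "m < N"
    then have "(\<Sum>i<N. f i) - f m = sum f ({..<N} - {m})" by (simp add: sum_diff1)
    also have "\<dots> \<in> K" using cone f by (intro cone_sum) auto
    finally show "(\<Sum>i<N. f i) - f m \<in> K" .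
  qed
  show "(\<lambda>N. (\<Sum>i<N. f i) - f m) \<longlonglongrightarrow> suminf f - f m"
    by (intro tendsto_diff summable_LIMSEQ s tendsto_const)
qed simp

lemma ii_imp_iii:
  fixes K :: "'a::banach set" and T :: "'a \<Rightarrow>\<^sub>L 'a"
  assumes cone: "ordered_cone K" and normal: "normal_cone K"
    and bij: "bij (blinfun_apply (id_blinfun - T))"
    and invpos: "inv (blinfun_apply (id_blinfun - T)) ` K \<subseteq> K"
  shows "\<exists>c\<ge>0. \<forall>x\<in>K. \<forall>y\<in>K. y - (x - T x) \<in> K \<longrightarrow> norm x \<le> c * norm y"
proof (rule ccontr)
  assume contra: "\<not> ?thesis"
  obtain C where C: "C > 0" "\<And>x y. x \<in> K \<Longrightarrow> y - x \<in> K \<Longrightarrow> norm x \<le> C * norm y"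
    using normal unfolding normal_cone_def by blast
  define f where "f = blinfun_apply (id_blinfun - T)"
  define g where "g = inv f"
  have inj: "inj f" using bij by (simp add: f_def bij_is_inj)
  have surj: "surj f" using bij by (simp add: f_def bij_is_surj)
  have fx: "f x = x - T x" for x by (simp add: f_def blinfun.bilinear_simps)
  have fg: "f (g y) = y" for y unfolding g_def by (rule surj_f_inv_f[OF surj])
  have gf: "g (f x) = x" for x unfolding g_def by (rule inv_f_f[OF inj])
  have gK: "y \<in> K \<Longrightarrow> g y \<in> K" for y using invpos by (auto simp: f_def g_def)
  have gdiff: "g (a - b) = g a - g b" for a b
  proof -
    have "f (g a - g b) = f (g a) - f (g b)" unfolding f_def by (rule blinfun.diff_right)
    also have "\<dots> = a - b" by (simp add: fg)
    finally have "f (g a - g b) = a - b" .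
    then show ?thesis using gf by metis
  qed
  have gscale: "g (t *\<^sub>R a) = t *\<^sub>R g a" for t a
  proof -
    have "f (t *\<^sub>R g a) = t *\<^sub>R f (g a)" unfolding f_def by (rule blinfun.scaleR_right)
    also have "\<dots> = t *\<^sub>R a" by (simp add: fg)
    finally have "f (t *\<^sub>R g a) = t *\<^sub>R a" .
    then show ?thesis using gf by metis
  qed
  have mono: "g y - x \<in> K" if "x \<in> K" "y \<in> K" "y - (x - T x) \<in> K" for x y
  proof -
    have "g y - x = g (y - f x)" by (simp add: gdiff gf)
    then show ?thesis using gK that by (simp add: fx)
  qed
  have "\<forall>n::nat. \<exists>x y. x \<in> K \<and> y \<in> K \<and> y - (x - T x) \<in> K \<and> 4 ^ n * norm y < norm x"
  proof
    fix n :: nat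
    have "(4::real) ^ n \<ge> 0" by simp
    then show "\<exists>x y. x \<in> K \<and> y \<in> K \<and> y - (x - T x) \<in> K \<and> 4 ^ n * norm y < norm x"
      using contra by (meson not_le)
  qed
  then obtain X Y where XY: "\<And>n. X n \<in> K" "\<And>n. Y n \<in> K" "\<And>n. Y n - (X n - T (X n)) \<in> K"
      "\<And>n. 4 ^ n * norm (Y n) < norm (X n)"
    by metis
  have Xpos: "norm (X n) > 0" for n using XY(4)[of n] by (smt (verit) norm_ge_zero zero_le_mult_iff zero_le_power)
  define a where "a n = (2::real) ^ n / norm (X n)" for n
  have a0: "a n > 0" for n using Xpos by (simp add: a_def)
  define z where "z n = a n *\<^sub>R Y n" for n
  have zK: "z n \<in> K" for n using cone XY(2) a0 by (simp add: z_def cone_scale less_imp_le)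
  have nz: "norm (z n) \<le> (1/2) ^ n" for n
  proof -
    have "2 ^ n * norm (Y n) * 2 ^ n \<le> norm (X n)"
    proof -
      have "(4::real) ^ n = 2 ^ n * 2 ^ n" by (simp add: power_mult_distrib[symmetric])
      then show ?thesis using XY(4)[of n] by (simp add: mult_ac)
    qed
    then have "2 ^ n * norm (Y n) \<le> norm (X n) / 2 ^ n" by (simp add: le_divide_eq)
    then have "2 ^ n * norm (Y n) / norm (X n) \<le> 1 / 2 ^ n"
      using Xpos[of n] by (simp add: divide_le_eq field_simps)
    then show ?thesis using a0[of n] by (simp add: z_def a_def power_one_over)
  qed
  have sz: "summable z"
  proof (rule summable_norm_cancel, rule summable_comparison_test)
    show "\<exists>N. \<forall>n\<ge>N. norm (norm (z n)) \<le> (1/2) ^ n" using nz by auto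
    show "summable (\<lambda>n. (1/2::real) ^ n)" by (rule summable_geometric) simp
  qed
  define yy where "yy = suminf z"
  have bound: "2 ^ n \<le> C * norm (g yy)" for n
  proof -
    define w where "w = a n *\<^sub>R X n"
    have wK: "w \<in> K" using cone XY(1) a0 by (simp add: w_def cone_scale less_imp_le)
    have nw: "norm w = 2 ^ n" using Xpos[of n] a0[of n] by (simp add: w_def a_def)
    have k1: "g (z n) - w \<in> K"
    proof -
      have "g (z n) - w = a n *\<^sub>R (g (Y n) - X n)" by (simp add: z_def w_def gscale algebra_simps)
      then show ?thesis using mono[OF XY(1) XY(2) XY(3)] cone a0 by (simp add: cone_scale less_imp_le)
    qed
    have k2: "g yy - g (z n) \<in> K"
      unfolding gdiff[symmetric] yy_def by (rule gK, rule cone_suminf_minus[OF cone sz zK])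
    have "g yy - w \<in> K" using cone_add[OF cone k2 k1] by simp
    then have "norm w \<le> C * norm (g yy)" using C(2) wK by blast
    then show ?thesis using nw by simp
  qed
  obtain n where "C * norm (g yy) < 2 ^ n" using real_arch_pow[of 2] by auto
  with bound[of n] show False by simp
qed

lemma R_imp_iv:
  fixes K :: "'a::banach set" and T :: "'a \<Rightarrow>\<^sub>L 'a"
  assumes cone: "ordered_cone K" and normal: "normal_cone K"
    and R: "inv_at T 1 R" and Rpos: "positive_op K R"
  shows "\<exists>\<eta>>0. \<forall>x\<in>K. infdist (T x - x) K \<ge> \<eta> * norm x"
proof -
  obtain C where C: "C > 0" "\<And>x y. x \<in> K \<Longrightarrow> y - x \<in> K \<Longrightarrow> norm x \<le> C * norm y"
    using normal unfolding normal_cone_def by blast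
  define \<eta> where "\<eta> = 1 / (C * (norm R + 1))"
  have CR: "C * (norm R + 1) > 0" using C(1) by (simp add: add_nonneg_pos)
  have e0: "\<eta> > 0" using CR by (simp add: \<eta>_def)
  have ne: "K \<noteq> {}" using cone_0[OF cone] by blast
  have Q1: "R (x - T x) = x" for x using R by (simp add: inv_at_def)
  have "\<eta> * norm x \<le> infdist (T x - x) K" if x: "x \<in> K" for x
    unfolding infdist_notempty[OF ne]
  proof (rule cINF_greatest[OF ne])
    fix k assume k: "k \<in> K"
    define w where "w = T x - x - k"
    have "x = R (- k - w)" using Q1[of x] by (simp add: w_def)
    then have xe: "x = - R k - R w" by (simp add: blinfun.bilinear_simps)
    have "(- R w) - x = R k" unfolding xe by simp
    then have "(- R w) - x \<in> K" using Rpos k unfolding positive_op_def by auto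
    then have "norm x \<le> C * norm (- R w)" using C(2) x by blast
    also have "\<dots> \<le> C * (norm R * norm w)" using C(1) norm_blinfun[of R w] by simp
    also have "\<dots> \<le> C * ((norm R + 1) * norm w)" using C(1) by (intro mult_left_mono mult_right_mono) auto
    finally have "norm x \<le> (C * (norm R + 1)) * norm w" by (simp add: mult_ac)
    then have "\<eta> * norm x \<le> norm w" using CR by (simp add: \<eta>_def divide_le_eq mult.commute)
    then show "\<eta> * norm x \<le> dist (T x - x) k" by (simp add: w_def dist_norm)
  qed
  then show ?thesis using e0 by blast
qed

lemma iv_imp_v:
  fixes K :: "'a::banach set" and T :: "'a \<Rightarrow>\<^sub>L 'a"
  assumes e0: "\<eta> > 0" and iv: "\<forall>x\<in>K. infdist (T x - x) K \<ge> \<eta> * norm x"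
  shows "\<exists>\<epsilon>>0. \<forall>x\<in>K. \<forall>P. x \<noteq> 0 \<longrightarrow> positive_op K P \<longrightarrow> norm P \<le> \<epsilon> \<longrightarrow> (T + P) x - x \<notin> K"
proof (intro exI[of _ "\<eta> / 2"] conjI ballI allI impI)
  show "\<eta> / 2 > 0" using e0 by simp
  fix x and P :: "'a \<Rightarrow>\<^sub>L 'a" assume x: "x \<in> K" "x \<noteq> 0" and P: "norm P \<le> \<eta> / 2"
  show "(T + P) x - x \<notin> K"
  proof
    assume k: "(T + P) x - x \<in> K"
    have "infdist (T x - x) K \<le> dist (T x - x) ((T + P) x - x)" by (rule infdist_le[OF k])
    also have "\<dots> = norm (P x)" by (simp add: dist_norm blinfun.bilinear_simps)
    also have "\<dots> \<le> norm P * norm x" by (rule norm_blinfun)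
    also have "\<dots> \<le> (\<eta> / 2) * norm x" using P by (intro mult_right_mono) auto
    also have "\<dots> < \<eta> * norm x" using e0 x by simp
    finally show False using iv x by auto
  qed
qed

lemma rank1:
  fixes \<phi> :: "'a::real_normed_vector \<Rightarrow> real"
  assumes bl: "bounded_linear \<phi>" and nb: "\<And>w. \<bar>\<phi> w\<bar> \<le> norm w" and u: "u \<noteq> 0" and x: "\<phi> x \<noteq> 0"
  shows "blinfun_apply (Blinfun (\<lambda>w. \<phi> w *\<^sub>R u)) = (\<lambda>w. \<phi> w *\<^sub>R u)"
    and "dim (range (blinfun_apply (Blinfun (\<lambda>w. \<phi> w *\<^sub>R u)))) = 1"
    and "norm (Blinfun (\<lambda>w. \<phi> w *\<^sub>R u)) \<le> norm u"
proof -
  have b: "bounded_linear (\<lambda>w. \<phi> w *\<^sub>R u)"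
    by (rule bounded_linear_compose[OF bounded_linear_scaleR_left bl])
  show ap: "blinfun_apply (Blinfun (\<lambda>w. \<phi> w *\<^sub>R u)) = (\<lambda>w. \<phi> w *\<^sub>R u)"
    using b by (rule bounded_linear_Blinfun_apply)
  have lin: "\<phi> (t *\<^sub>R w) = t * \<phi> w" for t w using linear.scaleR[OF bounded_linear.linear[OF bl]] by simp
  have "range (\<lambda>w. \<phi> w *\<^sub>R u) = range (\<lambda>k. k *\<^sub>R u)"
  proof safe
    fix t show "t *\<^sub>R u \<in> range (\<lambda>w. \<phi> w *\<^sub>R u)"
      using x by (intro image_eqI[of _ _ "(t / \<phi> x) *\<^sub>R x"]) (simp_all add: lin)
  qed auto
  also have "\<dots> = span {u}" by (simp add: span_singleton)
  finally have "dim (range (\<lambda>w. \<phi> w *\<^sub>R u)) = dim {u}" by simp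
  also have "\<dots> = 1" using u by (simp add: dim_eq_card_independent)
  finally show "dim (range (blinfun_apply (Blinfun (\<lambda>w. \<phi> w *\<^sub>R u)))) = 1" by (simp only: ap)
  show "norm (Blinfun (\<lambda>w. \<phi> w *\<^sub>R u)) \<le> norm u"
  proof (rule norm_blinfun_bound)
    show "0 \<le> norm u" by simp
    fix w show "norm (blinfun_apply (Blinfun (\<lambda>w. \<phi> w *\<^sub>R u)) w) \<le> norm u * norm w"
      using mult_left_mono[OF nb[of w] norm_ge_zero[of u]] by (simp add: ap mult.commute)
  qed
qed

lemma vi_imp_iii:
  fixes K :: "'a::banach set" and T :: "'a \<Rightarrow>\<^sub>L 'a"
  assumes cone: "ordered_cone K" and normal: "normal_cone K"
    and e0: "\<epsilon> > 0"
    and vi: "\<forall>x\<in>K. \<forall>P. x \<noteq> 0 \<longrightarrow> positive_op K P \<longrightarrow>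
                 dim (range (blinfun_apply P)) = 1 \<longrightarrow> norm P \<le> \<epsilon> \<longrightarrow> (T + P) x - x \<notin> K"
  shows "\<exists>c\<ge>0. \<forall>x\<in>K. \<forall>y\<in>K. y - (x - T x) \<in> K \<longrightarrow> norm x \<le> c * norm y"
proof -
  obtain C where C: "C > 0" "\<And>x y. x \<in> K \<Longrightarrow> y - x \<in> K \<Longrightarrow> norm x \<le> C * norm y"
    using normal unfolding normal_cone_def by blast
  define c where "c = 2 * C / \<epsilon>"
  have c0: "c \<ge> 0" using C e0 by (simp add: c_def)
  have "norm x \<le> c * norm y" if x: "x \<in> K" and y: "y \<in> K" and le: "y - (x - T x) \<in> K" for x y
  proof (rule ccontr)
    assume "\<not> norm x \<le> c * norm y"
    then have big: "c * norm y < norm x" by simp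
    then have nx: "norm x > 0" using c0 by (smt (verit) mult_nonneg_nonneg norm_ge_zero)
    then have x0: "x \<noteq> 0" by auto
    have Cy: "C * norm y \<le> (\<epsilon> / 2) * norm x"
    proof -
      have "c * norm y = (2 / \<epsilon>) * (C * norm y)" by (simp add: c_def)
      then have "(2 / \<epsilon>) * (C * norm y) \<le> norm x" using big by simp
      then show ?thesis using e0 by (simp add: field_simps)
    qed
    obtain \<phi> where \<phi>: "bounded_linear \<phi>" "\<And>w. \<bar>\<phi> w\<bar> \<le> norm w" "\<And>k. k \<in> K \<Longrightarrow> \<phi> k \<ge> 0"
      "\<phi> x \<ge> norm x / C"
      using pos_functional[OF cone C x] by blast
    have px: "\<phi> x > 0" using \<phi>(4) nx C(1) by (smt (verit) divide_pos_pos)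
    define s where "s = \<epsilon> / (2 * C)"
    have s0: "s > 0" using e0 C by (simp add: s_def)
    define u where "u = y + s *\<^sub>R x"
    have uK: "u \<in> K" using cone x y s0 by (simp add: u_def cone_add cone_scale)
    have u0: "u \<noteq> 0"
    proof
      assume "u = 0"
      then have "- (s *\<^sub>R x) = y" by (simp add: u_def add_eq_0_iff)
      then have "- (s *\<^sub>R x) \<in> K" using y by simp
      then have "s *\<^sub>R x = 0"
        by (intro cone_antisym[OF cone cone_scale[OF cone _ x]]) (use s0 in auto)
      then show False using s0 x0 by simp
    qed
    define v where "v = (1 / \<phi> x) *\<^sub>R u"
    have vK: "v \<in> K" using cone uK px by (simp add: v_def cone_scale)
    have v0: "v \<noteq> 0" using u0 px by (simp add: v_def)
    define P where "P = Blinfun (\<lambda>w. \<phi> w *\<^sub>R v)"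
    note r = rank1[OF \<phi>(1) \<phi>(2) v0, of x, folded P_def]
    have Pa: "P w = \<phi> w *\<^sub>R v" for w using px r(1) by simp
    have Ppos: "positive_op K P"
      unfolding positive_op_def using \<phi>(3) vK cone by (auto simp: Pa cone_scale)
    have Pdim: "dim (range (blinfun_apply P)) = 1" using r(2) px by simp
    have Pnorm: "norm P \<le> \<epsilon>"
    proof -
      have "norm P \<le> norm v" using r(3) px by simp
      also have "norm v = norm u / \<phi> x" using px by (simp add: v_def)
      also have "\<dots> \<le> norm u / (norm x / C)"
        using px \<phi>(4) nx C(1) by (intro divide_left_mono) auto
      also have "\<dots> = C * norm u / norm x" using C(1) by simp
      also have "\<dots> \<le> C * (norm y + s * norm x) / norm x"
      proof -
        have "norm u \<le> norm y + s * norm x"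
          using norm_triangle_ineq[of y "s *\<^sub>R x"] s0 by (simp add: u_def)
        then show ?thesis using C(1) nx by (intro divide_right_mono mult_left_mono) auto
      qed
      also have "\<dots> = C * norm y / norm x + C * s" using nx by (simp add: field_simps)
      also have "\<dots> \<le> \<epsilon> / 2 + \<epsilon> / 2"
      proof (rule add_mono)
        show "C * norm y / norm x \<le> \<epsilon> / 2" using Cy nx by (simp add: divide_le_eq)
        show "C * s \<le> \<epsilon> / 2" using C(1) by (simp add: s_def)
      qed
      finally show ?thesis by simp
    qed
    have "P x = u" using px by (simp add: Pa v_def)
    then have "(T + P) x - x = (y - (x - T x)) + s *\<^sub>R x"
      by (simp add: blinfun.bilinear_simps u_def algebra_simps)
    also have "\<dots> \<in> K" using cone le x s0 by (simp add: cone_add cone_scale)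
    finally have "(T + P) x - x \<in> K" .
    then show False using vi x x0 Ppos Pdim Pnorm by blast
  qed
  then show ?thesis using c0 by blast
qed

lemma R_imp_ii:
  fixes T :: "'a::banach \<Rightarrow>\<^sub>L 'a"
  assumes R: "inv_at T 1 R" and Rpos: "positive_op K R"
  shows "bij (blinfun_apply (id_blinfun - T)) \<and> inv (blinfun_apply (id_blinfun - T)) ` K \<subseteq> K"
proof -
  define f where "f = blinfun_apply (id_blinfun - T)"
  have fx: "f x = x - T x" for x by (simp add: f_def blinfun.bilinear_simps)
  have Q1: "R (f x) = x" for x using R by (simp add: inv_at_def fx)
  have Q2: "f (R x) = x" for x using R by (simp add: inv_at_def fx)
  have inj: "inj f" by (rule inj_on_inverseI[of _ R]) (simp add: Q1)
  have surj: "surj f" by (rule surjI[of f R]) (simp add: Q2)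
  have "inv f y = R y" for y by (rule inv_f_eq[OF inj Q2])
  then have "inv f ` K \<subseteq> K" using Rpos by (auto simp: positive_op_def)
  then show ?thesis using inj surj by (simp add: f_def bij_def)
qed

theorem theorem3p3:
  fixes K :: "'a::banach set" and T :: "'a \<Rightarrow>\<^sub>L 'a"
  assumes cone: "ordered_cone K"
    and gen: "generating_cone K"
    and normal: "normal_cone K"
    and pos: "positive_op K T"
  defines "i \<equiv> spectral_radius T < 1"
    and "ii \<equiv> bij (blinfun_apply (id_blinfun - T)) \<and>
              inv (blinfun_apply (id_blinfun - T)) ` K \<subseteq> K"
    and "iii \<equiv> (\<exists>c\<ge>0. \<forall>x\<in>K. \<forall>y\<in>K. y - (x - T x) \<in> K \<longrightarrow> norm x \<le> c * norm y)"
    and "iv \<equiv> (\<exists>\<eta>>0. \<forall>x\<in>K. infdist (T x - x) K \<ge> \<eta> * norm x)"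
    and "v \<equiv> (\<exists>\<epsilon>>0. \<forall>x\<in>K. \<forall>P. x \<noteq> 0 \<longrightarrow> positive_op K P \<longrightarrow> norm P \<le> \<epsilon> \<longrightarrow>
                 (T + P) x - x \<notin> K)"
    and "vi \<equiv> (\<exists>\<epsilon>>0. \<forall>x\<in>K. \<forall>P. x \<noteq> 0 \<longrightarrow> positive_op K P \<longrightarrow>
                 dim (range (blinfun_apply P)) = 1 \<longrightarrow> norm P \<le> \<epsilon> \<longrightarrow>
                 (T + P) x - x \<notin> K)"
  shows "(i \<longleftrightarrow> ii) \<and> (i \<longleftrightarrow> iii) \<and> (i \<longleftrightarrow> iv) \<and> (i \<longleftrightarrow> v) \<and> (i \<longleftrightarrow> vi)"
proof -
  have iR: "\<exists>R. inv_at T 1 R \<and> positive_op K R" if i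
    using i_imp_R[OF cone pos] that unfolding i_def by blast
  have i_ii: "ii" if i
    using iR[OF that] R_imp_ii unfolding ii_def by blast
  have ii_iii: "iii" if ii
    using ii_imp_iii[OF cone normal] that unfolding ii_def iii_def by blast
  have iii_i: "i" if iii
    using iii_imp_i[OF cone gen normal pos] that unfolding iii_def i_def by blast
  have i_iv: "iv" if i
    using iR[OF that] R_imp_iv[OF cone normal] unfolding iv_def by blast
  have iv_v: "v" if iv
    using iv_imp_v that unfolding iv_def v_def by blast
  have v_vi: "vi" if v
    using that unfolding v_def vi_def by blast
  have vi_iii: "iii" if vi
    using vi_imp_iii[OF cone normal] that unfolding vi_def iii_def by blast
  show ?thesis
    using i_ii ii_iii iii_i i_iv iv_v v_vi vi_iii by blast
qed

end
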